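(* Let $X$ be a real Hilbert space and $I$ either $[0,T]$ ($T>0$) or $[0,+\infty)$. Assume: $K\subset X$ is a nonempty closed convex cone; $A:X\to X$ satisfies $(Au-Av,u-v)_X\ge m_A\|u-v\|_X^2$ and $\|Au-Av\|_X\le L_A\|u-v\|_X$ for all $u,v\in X$, with $m_A,L_A>0$; $f\in C(I;X)$; $B:X\to X$ is Lipschitz continuous; $u_0\in X$; $\mathcal{S}:C(I;X)\to C(I;X)$ is a history-dependent operator; $j:X\times K\to\mathbb{R}$ is such that $j(\eta,\cdot)$ is convex, positively homogeneous and Lipschitz continuous on $K$ for every $\eta\in X$, and there is $\alpha_j\ge0$ with $j(\eta_1,v_2)-j(\eta_1,v_1)+j(\eta_2,v_1)-j(\eta_2,v_2)\le\alpha_j\|\eta_1-\eta_2\|_X\|v_1-v_2\|_X$ for all $\eta_i\in X$, $v_i\in K$. Then there exists a unique function $u\in C^1(I;X)$ such that $$-\dot u(t)\in \mathrm{N}_{C(u(t),t)}\big(A\dot u(t)+Bu(t)+\mathcal{S}\dot u(t)\big)\quad\forall\,t\in I,\qquad u(0)=u_0.$$ Moreover, $\dot u\in C(I;K)$.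
   Context: $\mathcal{S}$ is history-dependent if for every compact $\mathcal J\subset I$ there is $L_{\mathcal J}>0$ with $\|\mathcal{S}u_1(t)-\mathcal{S}u_2(t)\|_X\le L_{\mathcal J}\int_0^t\|u_1(s)-u_2(s)\|_X ds$ for all $u_1,u_2\in C(I;X)$, $t\in\mathcal J$. Define $J(\eta,v)=j(\eta,v)$ for $v\in K$, $J(\eta,v)=+\infty$ for $v\notin K$; $C(\eta)=\{\xi\in X: J(\eta,v)\ge(\xi,v)_X\ \forall v\in X\}$; $C(\eta,t)=f(t)-C(\eta)$. For a nonempty closed convex $D\subset X$, $\mathrm{N}_D(x)=\{\xi:(\xi,w-x)_X\le0\ \forall w\in D\}$ if $x\in D$, $\emptyset$ otherwise. *)

theory Defs
  imports "HOL-Analysis.Analysis"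
begin

definition normal_cone :: "'a::real_inner set \<Rightarrow> 'a \<Rightarrow> 'a set" where
  "normal_cone D x = (if x \<in> D then {\<xi>. \<forall>w\<in>D. inner \<xi> (w - x) \<le> 0} else {})"

definition Jext :: "('a \<Rightarrow> 'a \<Rightarrow> real) \<Rightarrow> 'a set \<Rightarrow> 'a \<Rightarrow> 'a \<Rightarrow> ereal" where
  "Jext j K \<eta> v = (if v \<in> K then ereal (j \<eta> v) else \<infinity>)"

definition Cset :: "('a::real_inner \<Rightarrow> 'a \<Rightarrow> real) \<Rightarrow> 'a set \<Rightarrow> 'a \<Rightarrow> 'a set" where
  "Cset j K \<eta> = {\<xi>. \<forall>v. Jext j K \<eta> v \<ge> ereal (inner \<xi> v)}"

definition Cset_t :: "('a::real_inner \<Rightarrow> 'a \<Rightarrow> real) \<Rightarrow> 'a set \<Rightarrow> (real \<Rightarrow> 'a) \<Rightarrow> 'a \<Rightarrow> real \<Rightarrow> 'a set" where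
  "Cset_t j K f \<eta> t = (\<lambda>\<xi>. f t - \<xi>) ` Cset j K \<eta>"

definition history_dependent :: "real set \<Rightarrow> ((real \<Rightarrow> 'a::real_normed_vector) \<Rightarrow> (real \<Rightarrow> 'a)) \<Rightarrow> bool" where
  "history_dependent I S \<longleftrightarrow>
     (\<forall>J. compact J \<and> J \<subseteq> I \<longrightarrow>
        (\<exists>L>0. \<forall>u1 u2. continuous_on I u1 \<and> continuous_on I u2 \<longrightarrow>
           (\<forall>t\<in>J. norm (S u1 t - S u2 t) \<le> L * integral {0..t} (\<lambda>s. norm (u1 s - u2 s)))))"

definition is_solution ::
  "real set \<Rightarrow> ('a::real_inner \<Rightarrow> 'a) \<Rightarrow> ('a \<Rightarrow> 'a) \<Rightarrow> ((real \<Rightarrow> 'a) \<Rightarrow> (real \<Rightarrow> 'a))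
   \<Rightarrow> (real \<Rightarrow> 'a) \<Rightarrow> ('a \<Rightarrow> 'a \<Rightarrow> real) \<Rightarrow> 'a set \<Rightarrow> 'a \<Rightarrow> (real \<Rightarrow> 'a) \<Rightarrow> (real \<Rightarrow> 'a) \<Rightarrow> bool" where
  "is_solution I A B S f j K u0 u u' \<longleftrightarrow>
     (\<forall>t\<in>I. (u has_vector_derivative u' t) (at t within I)) \<and> continuous_on I u' \<and>
     (\<forall>t\<in>I. - u' t \<in> normal_cone (Cset_t j K f (u t) t) (A (u' t) + B (u t) + S u' t)) \<and>
     u 0 = u0"

end

theory Submission
  imports Defs
begin


lemma norm_mid_sq:
  fixes a b z :: "'a::real_inner"
  shows "(norm ((1/2) *\<^sub>R a + (1/2) *\<^sub>R b - z))^2 = (norm (a - z))^2/2 + (norm (b - z))^2/2 - (norm (a - b))^2/4"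
proof -
  define p where "p = a - z"
  define q where "q = b - z"
  have z2: "(1/2) *\<^sub>R z + (1/2) *\<^sub>R z = z" by (simp flip: scaleR_add_left)
  have e: "(1/2) *\<^sub>R a + (1/2) *\<^sub>R b - z = (1/2) *\<^sub>R (p + q)"
    unfolding p_def q_def by (metis (no_types, lifting) z2 add_diff_add scaleR_add_right scaleR_diff_right)
  have f: "a - b = p - q" by (simp add: p_def q_def)
  show ?thesis unfolding e f p_def[symmetric] q_def[symmetric] power2_norm_eq_inner
    by (simp add: inner_add_left inner_add_right inner_diff_left inner_diff_right inner_commute[of q p] field_simps)
qed

lemma norm_line_sq:
  fixes x v z :: "'a::real_inner"
  shows "(norm ((1-t) *\<^sub>R x + t *\<^sub>R v - z))^2 = (norm (x-z))^2 + 2*t*inner (x-z) (v-x) + t^2 * (norm (v-x))^2"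
proof -
  define p where "p = x - z"
  define q where "q = v - x"
  have e: "(1-t) *\<^sub>R x + t *\<^sub>R v - z = p + t *\<^sub>R q" by (simp add: p_def q_def algebra_simps)
  show ?thesis unfolding e p_def[symmetric] q_def[symmetric] power2_norm_eq_inner
    by (simp add: inner_add inner_diff inner_commute algebra_simps power2_eq_square)
qed

lemma prox_exists:
  fixes K :: "'a::{real_inner,complete_space} set" and \<phi> :: "'a \<Rightarrow> real"
  assumes cK: "convex K" and clK: "closed K" and neK: "K \<noteq> {}"
    and cvx: "convex_on K \<phi>" and lip: "L-lipschitz_on K \<phi>"
  shows "\<exists>x\<in>K. \<forall>v\<in>K. inner (x - z) (v - x) + \<phi> v - \<phi> x \<ge> 0"
proof -
  define F where "F x = (norm (x - z))^2/2 + \<phi> x" for x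
  obtain k0 where k0: "k0 \<in> K" using neK by auto
  have L0: "L \<ge> 0" using lip by (simp add: lipschitz_on_def)
  have lb: "F x \<ge> \<phi> k0 - L * norm (z - k0) - (L*L)/2" if "x \<in> K" for x
  proof -
    have "dist (\<phi> x) (\<phi> k0) \<le> L * dist x k0" using lipschitz_onD[OF lip that k0] .
    hence "\<phi> x \<ge> \<phi> k0 - L * norm (x - k0)" by (simp add: dist_norm dist_real_def abs_le_iff)
    moreover have "norm (x - k0) \<le> norm (x - z) + norm (z - k0)"
      by (metis add.commute diff_add_cancel norm_triangle_ineq add_diff_eq)
    moreover have "(norm (x - z))^2/2 - L * norm (x - z) \<ge> - (L*L)/2"
    proof -
      have "0 \<le> (norm (x - z) - L)^2" by simp
      thus ?thesis by (simp add: power2_eq_square algebra_simps)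
    qed
    ultimately show ?thesis unfolding F_def using L0 mult_left_mono[of "norm (x - k0)" "norm (x - z) + norm (z - k0)" L]
      by (simp add: algebra_simps)
  qed
  define m where "m = Inf (F ` K)"
  have bdd: "bdd_below (F ` K)" using lb by (intro bdd_belowI2) auto
  have mle: "m \<le> F x" if "x \<in> K" for x unfolding m_def using bdd that by (simp add: cInf_lower)
  have "\<exists>x\<in>K. F x < m + 1/(real n+1)" for n
  proof -
    have "m < m + 1/(real n+1)" by simp
    from cInf_lessD[OF _ this[unfolded m_def]] neK show ?thesis by (auto simp: m_def)
  qed
  then obtain X where X: "\<And>n. X n \<in> K" "\<And>n. F (X n) < m + 1/(real n+1)" by metis
  have mid: "(norm (a - b))^2 \<le> 4 * (F a + F b - 2*m)" if "a \<in> K" "b \<in> K" for a b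
  proof -
    define c where "c = (1/2) *\<^sub>R a + (1/2) *\<^sub>R b"
    have inK: "c \<in> K" using cK that unfolding c_def convex_def by (metis field_sum_of_halves less_eq_real_def zero_less_divide_1_iff zero_less_numeral)
    have cv: "\<phi> c \<le> \<phi> a/2 + \<phi> b/2"
      using convex_onD[OF cvx, of "1/2" a b] that by (simp add: c_def)
    have n: "(norm (c - z))^2 = (norm (a - z))^2/2 + (norm (b - z))^2/2 - (norm (a - b))^2/4"
      unfolding c_def by (rule norm_mid_sq)
    have "m \<le> F c" using mle[OF inK] .
    also have "F c = (norm (c - z))^2/2 + \<phi> c" by (simp add: F_def)
    also have "\<dots> \<le> (norm (a - z))^2/4 + (norm (b - z))^2/4 - (norm (a - b))^2/8 + \<phi> a/2 + \<phi> b/2"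
      using cv n by linarith
    finally show ?thesis unfolding F_def by simp
  qed
  have cau: "Cauchy X"
  proof (rule metric_CauchyI)
    fix e :: real assume e: "e > 0"
    obtain M :: nat where M: "real M > 8 / e^2" using reals_Archimedean2 by blast
    show "\<exists>M. \<forall>m\<ge>M. \<forall>n\<ge>M. dist (X m) (X n) < e"
    proof (intro exI allI impI)
      fix p q assume p: "p \<ge> M" and q: "q \<ge> M"
      have "(norm (X p - X q))^2 \<le> 4 * (F (X p) + F (X q) - 2*m)" using mid X by auto
      also have "\<dots> \<le> 4 * (1/(real p+1) + 1/(real q+1))" using X(2)[of p] X(2)[of q] by simp
      also have "\<dots> \<le> 4 * (1/(real M+1) + 1/(real M+1))"
        using p q by (intro mult_left_mono add_mono divide_left_mono) auto
      also have "\<dots> < e^2"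
      proof -
        have "8 < e^2 * (real M + 1)" using M e by (simp add: field_simps) (smt (verit) mult_pos_pos zero_less_power)
        thus ?thesis using e by (simp add: field_simps)
      qed
      finally have "(norm (X p - X q))^2 < e^2" .
      hence "norm (X p - X q) < e" using e by (simp add: power_less_imp_less_base)
      thus "dist (X p) (X q) < e" by (simp add: dist_norm)
    qed
  qed
  then obtain x where xl: "X \<longlonglongrightarrow> x" using Cauchy_convergent_iff convergent_def by blast
  have xK: "x \<in> K" using closed_sequentially[OF clK X(1) xl] .
  have FX: "(\<lambda>n. F (X n)) \<longlonglongrightarrow> F x"
  proof -
    have "(\<lambda>n. (norm (X n - z))^2/2) \<longlonglongrightarrow> (norm (x - z))^2/2"
      by (intro tendsto_intros xl) simp
    moreover have "(\<lambda>n. \<phi> (X n)) \<longlonglongrightarrow> \<phi> x"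
    proof -
      have "(\<lambda>n. \<phi> (X n) - \<phi> x) \<longlonglongrightarrow> 0"
      proof (rule Lim_null_comparison)
        show "\<forall>\<^sub>F n in sequentially. norm (\<phi> (X n) - \<phi> x) \<le> L * norm (X n - x)"
          using lipschitz_onD[OF lip X(1) xK] by (simp add: dist_norm dist_real_def)
        have "(\<lambda>n. X n - x) \<longlonglongrightarrow> 0" using xl by (simp add: LIM_zero)
        then show "(\<lambda>n. L * norm (X n - x)) \<longlonglongrightarrow> 0"
          by (metis mult_zero_right tendsto_mult_left tendsto_norm_zero)
      qed
      thus ?thesis by (simp add: LIM_zero_iff)
    qed
    ultimately show ?thesis unfolding F_def by (intro tendsto_add)
  qed
  have "F x \<le> m"
  proof (rule LIMSEQ_le[OF FX])
    show "(\<lambda>n. m + 1/(real n+1)) \<longlonglongrightarrow> m"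
      using LIMSEQ_inverse_real_of_nat_add[of m] by (simp add: inverse_eq_divide add.commute)
    show "\<exists>N. \<forall>n\<ge>N. F (X n) \<le> m + 1 / (real n + 1)" using X(2) less_imp_le by blast
  qed
  hence xmin: "F x \<le> F y" if "y \<in> K" for y using mle[OF that] by simp
  show ?thesis
  proof (intro bexI[OF _ xK] ballI)
    fix v assume v: "v \<in> K"
    define Q where "Q = inner (x - z) (v - x) + \<phi> v - \<phi> x"
    have key: "0 \<le> Q + t * (norm (v - x))^2/2" if t: "0 < t" "t \<le> 1" for t
    proof -
      have yK: "(1-t) *\<^sub>R x + t *\<^sub>R v \<in> K" using cK xK v t by (simp add: convex_def)
      have c: "\<phi> ((1-t) *\<^sub>R x + t *\<^sub>R v) \<le> (1-t) * \<phi> x + t * \<phi> v"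
        using convex_onD[OF cvx, of t x v] t xK v by simp
      have "F x \<le> F ((1-t) *\<^sub>R x + t *\<^sub>R v)" using xmin[OF yK] .
      hence "(norm (x - z))^2/2 + \<phi> x \<le> ((norm (x-z))^2 + 2*t*inner (x-z) (v-x) + t^2 * (norm (v-x))^2)/2 + \<phi> ((1-t) *\<^sub>R x + t *\<^sub>R v)"
        unfolding F_def norm_line_sq .
      hence h1: "(norm (x - z))^2/2 + \<phi> x \<le> (norm (x - z))^2/2 + t*inner (x-z) (v-x) + t^2 * (norm (v-x))^2/2 + \<phi> ((1-t) *\<^sub>R x + t *\<^sub>R v)"
        by (simp add: field_simps)
      have c': "\<phi> ((1-t) *\<^sub>R x + t *\<^sub>R v) \<le> \<phi> x - t * \<phi> x + t * \<phi> v"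
        using c by (simp add: algebra_simps)
      have "0 \<le> t * inner (x-z) (v-x) + t^2 * (norm (v-x))^2/2 + t * \<phi> v - t * \<phi> x"
        using h1 c' by linarith
      hence "0 \<le> t * inner (x-z) (v-x) + t^2 * (norm (v-x))^2/2 + t * (\<phi> v - \<phi> x)"
        by (simp add: algebra_simps)
      hence "0 \<le> t * (Q + t * (norm (v - x))^2/2)" unfolding Q_def by (simp add: algebra_simps power2_eq_square)
      thus ?thesis using t by (simp add: zero_le_mult_iff)
    qed
    show "0 \<le> Q"
    proof (rule ccontr)
      assume "\<not> 0 \<le> Q"
      hence Qn: "Q < 0" by simp
      define t where "t = min 1 (- Q / ((norm (v - x))^2 + 1))"
      have t0: "0 < t" "t \<le> 1" unfolding t_def using Qn by (auto simp: field_simps add_pos_nonneg)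
      have "t * (norm (v - x))^2 \<le> (- Q / ((norm (v - x))^2 + 1)) * (norm (v - x))^2"
        unfolding t_def by (intro mult_right_mono) auto
      also have "\<dots> = (- Q) * ((norm (v - x))^2 / ((norm (v - x))^2 + 1))" by simp
      also have "\<dots> \<le> (- Q) * 1" using Qn by (intro mult_left_mono) (auto simp: divide_le_eq add_pos_nonneg, smt (verit) zero_le_power2)
      also have "\<dots> = - Q" by simp
      finally have "t * (norm (v - x))^2/2 < - Q" using Qn by simp
      thus False using key[OF t0] by simp
    qed
  qed
qed


lemma riesz:
  fixes l :: "'a::{real_inner,complete_space} \<Rightarrow> real"
  assumes add: "\<And>x y. l (x + y) = l x + l y" and sc: "\<And>c x. l (c *\<^sub>R x) = c * l x"
    and bd: "\<And>x. \<bar>l x\<bar> \<le> M * norm x"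
  shows "\<exists>r. \<forall>x. l x = inner x r"
proof (cases "\<forall>x. l x = 0")
  case True thus ?thesis by (intro exI[of _ 0]) simp
next
  case False
  then obtain z where lz: "l z \<noteq> 0" by auto
  have bl: "bounded_linear l"
    by (rule bounded_linear_intro[where K=M]) (use add sc bd in \<open>auto simp: mult.commute\<close>)
  have l0: "l 0 = 0" using sc[of 0 0] by simp
  have ldiff: "l (x - y) = l x - l y" for x y using add[of "x - y" y] by simp
  define N where "N = {x. l x = 0}"
  have cN: "convex N" unfolding N_def convex_def using add sc by simp
  have clN: "closed N" unfolding N_def
    by (rule closed_Collect_eq) (auto intro: linear_continuous_on bl)
  have neN: "N \<noteq> {}" using l0 N_def by auto
  obtain q where qN: "q \<in> N" and q: "\<forall>v\<in>N. inner (q - z) (v - q) + 0 - 0 \<ge> 0"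
    using prox_exists[OF cN clN neN _ lipschitz_on_constant[of N 0], of z] by (auto simp: convex_on_const cN)
  define p where "p = z - q"
  have lp: "l p = l z" using qN by (simp add: p_def ldiff N_def)
  have orth: "inner p v = 0" if "v \<in> N" for v
  proof -
    have "q + v \<in> N" "q - v \<in> N" using that qN by (auto simp: N_def ldiff add)
    with q have "inner (q - z) v \<ge> 0" "inner (q - z) (- v) \<ge> 0" by force+
    thus ?thesis by (simp add: p_def inner_diff_left inner_minus_right)
  qed
  have pp: "inner p p \<noteq> 0" using lp lz l0 by auto
  show ?thesis
  proof (intro exI[of _ "(l p / inner p p) *\<^sub>R p"] allI)
    fix x
    have "x - (l x / l p) *\<^sub>R p \<in> N" using lp lz by (simp add: N_def ldiff sc)
    hence "inner p (x - (l x / l p) *\<^sub>R p) = 0" by (rule orth)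
    hence "inner p x = (l x / l p) * inner p p" by (simp add: inner_diff_right)
    thus "l x = inner x ((l p / inner p p) *\<^sub>R p)"
      using pp lp lz by (simp add: inner_commute field_simps)
  qed
qed

definition Ant :: "(real \<Rightarrow> 'a::real_inner) \<Rightarrow> real \<Rightarrow> 'a" where
  "Ant w t = (SOME r. \<forall>e. inner r e = integral {0..t} (\<lambda>s. inner (w s) e))"

lemma Ant_inner:
  fixes w :: "real \<Rightarrow> 'a::{real_inner,complete_space}"
  assumes w: "continuous_on {0..t} w"
  shows "inner (Ant w t) e = integral {0..t} (\<lambda>s. inner (w s) e)"
proof -
  have int: "(\<lambda>s. inner (w s) e) integrable_on {0..t}" for e
    by (intro integrable_continuous_real continuous_intros w)
  have intn: "(\<lambda>s. norm (w s)) integrable_on {0..t}"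
    by (intro integrable_continuous_real continuous_intros w)
  define l where "l e = integral {0..t} (\<lambda>s. inner (w s) e)" for e
  have "\<exists>r. \<forall>x. l x = inner x r"
  proof (rule riesz)
    fix x y show "l (x + y) = l x + l y" unfolding l_def inner_add_right by (rule integral_add[OF int int])
  next
    fix c x show "l (c *\<^sub>R x) = c * l x" unfolding l_def inner_scaleR_right by simp
  next
    fix x
    have "norm (l x) \<le> integral {0..t} (\<lambda>s. norm (w s) * norm x)" unfolding l_def
      by (rule integral_norm_bound_integral[OF int integrable_continuous_real])
        (auto intro!: continuous_intros w simp: Cauchy_Schwarz_ineq2)
    thus "\<bar>l x\<bar> \<le> integral {0..t} (\<lambda>s. norm (w s)) * norm x" by simp
  qed
  then obtain r where "\<forall>x. inner r x = l x" by (metis inner_commute)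
  hence "\<forall>e. inner (Ant w t) e = l e" unfolding Ant_def l_def by (rule someI)
  thus ?thesis by (simp add: l_def)
qed

lemma weak_norm_bound:
  fixes D :: "'a::real_inner" and a b :: real
  assumes D: "\<And>e. inner D e = integral {a..b} (\<lambda>s. inner (v s) e)"
    and v: "continuous_on {a..b} v"
  shows "norm D \<le> integral {a..b} (\<lambda>s. norm (v s))"
proof (cases "D = 0")
  case True
  have "0 \<le> integral {a..b} (\<lambda>s. norm (v s))"
    by (rule integral_nonneg[OF integrable_continuous_real]) (auto intro!: continuous_intros v)
  thus ?thesis using True by simp
next
  case False
  have "(norm D)^2 = inner D D" by (simp add: power2_norm_eq_inner)
  also have "\<dots> = integral {a..b} (\<lambda>s. inner (v s) D)" by (rule D)
  also have "\<dots> \<le> integral {a..b} (\<lambda>s. norm (v s) * norm D)"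
    by (rule integral_le[OF integrable_continuous_real integrable_continuous_real])
       (auto intro!: continuous_intros v simp: order_trans[OF _ Cauchy_Schwarz_ineq2])
  also have "\<dots> = integral {a..b} (\<lambda>s. norm (v s)) * norm D" by simp
  finally show ?thesis using False by (simp add: power2_eq_square)
qed


lemma Ant_deriv:
  fixes w :: "real \<Rightarrow> 'a::{real_inner,complete_space}"
  assumes w: "continuous_on {0..T} w" and t: "t \<in> {0..T}"
  shows "(Ant w has_vector_derivative w t) (at t within {0..T})"
proof -
  have AI: "inner (Ant w y) e = integral {0..y} (\<lambda>s. inner (w s) e)" if "y \<in> {0..T}" for y e
    using Ant_inner[OF continuous_on_subset[OF w]] that by auto
  have wc: "continuous_on {a..b} w" if "0 \<le> a" "b \<le> T" for a b
    using continuous_on_subset[OF w] that by auto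
  have wi: "(\<lambda>s. inner (w s) e') integrable_on {a..b}" if "0 \<le> a" "b \<le> T" for a b e'
    by (intro integrable_continuous_real continuous_intros wc that)
  show ?thesis unfolding has_vector_derivative_def has_derivative_within_alt
  proof (intro conjI allI impI)
    show "bounded_linear (\<lambda>x. x *\<^sub>R w t)" by (rule bounded_linear_scaleR_left)
    fix e :: real assume e: "e > 0"
    obtain d where d: "d > 0" "\<forall>s\<in>{0..T}. dist s t < d \<longrightarrow> dist (w s) (w t) < e"
      using w t e unfolding continuous_on_iff by metis
    show "\<exists>d>0. \<forall>y\<in>{0..T}. norm (y - t) < d \<longrightarrow> norm (Ant w y - Ant w t - (y - t) *\<^sub>R w t) \<le> e * norm (y - t)"
    proof (intro exI[of _ d] conjI ballI impI)
      show "d > 0" by (rule d)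
      fix y assume y: "y \<in> {0..T}" and yd: "norm (y - t) < d"
      define D where "D = Ant w y - Ant w t - (y - t) *\<^sub>R w t"
      have near: "norm (w s - w t) \<le> e" if "s \<in> {0..T}" "\<bar>s - t\<bar> \<le> \<bar>y - t\<bar>" for s
      proof -
        have "dist s t < d" using that yd by (simp add: dist_real_def)
        thus ?thesis using d(2) that(1) by (force simp: dist_norm)
      qed
      have "norm D \<le> e * norm (y - t)"
      proof (cases "t \<le> y")
        case True
        have "inner D e' = integral {t..y} (\<lambda>s. inner (w s - w t) e')" for e'
        proof -
          have c: "integral {0..t} (\<lambda>s. inner (w s) e') + integral {t..y} (\<lambda>s. inner (w s) e') = integral {0..y} (\<lambda>s. inner (w s) e')"
            using True t y by (intro Henstock_Kurzweil_Integration.integral_combine[OF _ _ wi]) auto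
          have "integral {t..y} (\<lambda>s. inner (w s - w t) e') = integral {t..y} (\<lambda>s. inner (w s) e') - (y - t) * inner (w t) e'"
            unfolding inner_diff_left using True t y by (subst integral_diff) (auto intro!: wi)
          thus ?thesis using c AI[OF y] AI[OF t] by (simp add: D_def inner_diff_left)
        qed
        hence "norm D \<le> integral {t..y} (\<lambda>s. norm (w s - w t))"
          by (intro weak_norm_bound) (use True t y in \<open>auto intro!: continuous_intros wc\<close>)
        also have "\<dots> \<le> integral {t..y} (\<lambda>s. e)"
          using True t y by (intro integral_le integrable_continuous_real) (auto intro!: continuous_intros wc near)
        also have "\<dots> = e * norm (y - t)" using True by simp
        finally show ?thesis .
      next
        case False
        have "inner D e' = integral {y..t} (\<lambda>s. inner (w t - w s) e')" for e'
        proof -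
          have c: "integral {0..y} (\<lambda>s. inner (w s) e') + integral {y..t} (\<lambda>s. inner (w s) e') = integral {0..t} (\<lambda>s. inner (w s) e')"
            using False t y by (intro Henstock_Kurzweil_Integration.integral_combine[OF _ _ wi]) auto
          have "integral {y..t} (\<lambda>s. inner (w t - w s) e') = (t - y) * inner (w t) e' - integral {y..t} (\<lambda>s. inner (w s) e')"
            unfolding inner_diff_left using False t y by (subst integral_diff) (auto intro!: wi)
          thus ?thesis using c AI[OF y] AI[OF t] by (simp add: D_def inner_diff_left algebra_simps)
        qed
        hence "norm D \<le> integral {y..t} (\<lambda>s. norm (w t - w s))"
          by (intro weak_norm_bound) (use False t y in \<open>auto intro!: continuous_intros wc\<close>)
        also have "\<dots> \<le> integral {y..t} (\<lambda>s. e)"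
          using False t y by (intro integral_le integrable_continuous_real) (auto intro!: continuous_intros wc near simp: norm_minus_commute)
        also have "\<dots> = e * norm (y - t)" using False by simp
        finally show ?thesis .
      qed
      thus "norm (Ant w y - Ant w t - (y - t) *\<^sub>R w t) \<le> e * norm (y - t)" by (simp add: D_def)
    qed
  qed
qed

lemma Ant_0:
  fixes w :: "real \<Rightarrow> 'a::{real_inner,complete_space}"
  shows "Ant w 0 = 0"
proof -
  have "continuous_on {0..0} w" by simp
  from Ant_inner[OF this, of "Ant w 0"] show ?thesis by simp
qed

lemma Ant_diff_bound:
  fixes w1 w2 :: "real \<Rightarrow> 'a::{real_inner,complete_space}"
  assumes "continuous_on {0..t} w1" "continuous_on {0..t} w2"
  shows "norm (Ant w1 t - Ant w2 t) \<le> integral {0..t} (\<lambda>s. norm (w1 s - w2 s))"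
proof (rule weak_norm_bound)
  fix e
  show "inner (Ant w1 t - Ant w2 t) e = integral {0..t} (\<lambda>s. inner (w1 s - w2 s) e)"
    unfolding inner_diff_left Ant_inner[OF assms(1)] Ant_inner[OF assms(2)]
    by (subst integral_diff) (auto intro!: integrable_continuous_real continuous_intros assms)
qed (auto intro!: continuous_intros assms)

lemma ftc_weak:
  fixes u :: "real \<Rightarrow> 'a::real_inner"
  assumes "0 \<le> t" and d: "\<And>s. s \<in> {0..t} \<Longrightarrow> (u has_vector_derivative u' s) (at s within {0..t})"
  shows "inner (u t - u 0) e = integral {0..t} (\<lambda>s. inner (u' s) e)"
proof -
  have "((\<lambda>s. inner (u' s) e) has_integral (inner (u t) e - inner (u 0) e)) {0..t}"
  proof (rule fundamental_theorem_of_calculus[OF assms(1)])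
    fix s assume s: "s \<in> {0..t}"
    have "((\<lambda>x. inner (u x) e) has_derivative (\<lambda>x. inner (x *\<^sub>R u' s) e)) (at s within {0..t})"
      using d[OF s] unfolding has_vector_derivative_def by (rule has_derivative_inner_left)
    thus "((\<lambda>x. inner (u x) e) has_vector_derivative inner (u' s) e) (at s within {0..t})"
      unfolding has_vector_derivative_def by (simp add: mult.commute)
  qed
  thus ?thesis by (simp add: integral_unique inner_diff_left)
qed


locale jK =
  fixes K :: "'a::{real_inner,complete_space} set" and j :: "'a \<Rightarrow> 'a \<Rightarrow> real" and \<alpha> :: real
  assumes K: "convex_cone K" "closed K"
    and j_convex: "\<And>\<eta>. convex_on K (j \<eta>)"
    and j_homog: "\<And>\<eta> c v. c > 0 \<Longrightarrow> v \<in> K \<Longrightarrow> j \<eta> (c *\<^sub>R v) = c * j \<eta> v"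
    and j_lip: "\<And>\<eta>. \<exists>L. L-lipschitz_on K (j \<eta>)"
    and j_mix: "\<And>\<eta>1 \<eta>2 v1 v2. v1 \<in> K \<Longrightarrow> v2 \<in> K \<Longrightarrow>
       j \<eta>1 v2 - j \<eta>1 v1 + j \<eta>2 v1 - j \<eta>2 v2 \<le> \<alpha> * norm (\<eta>1 - \<eta>2) * norm (v1 - v2)"
begin

lemma K0: "0 \<in> K" and Kadd: "x \<in> K \<Longrightarrow> y \<in> K \<Longrightarrow> x + y \<in> K"
  and Ksc: "x \<in> K \<Longrightarrow> c \<ge> 0 \<Longrightarrow> c *\<^sub>R x \<in> K"
  using K(1) unfolding convex_cone_iff by auto

lemma Kconv: "convex K" and Kne: "K \<noteq> {}"
  using K(1) unfolding convex_cone_def by auto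

lemma Cset_iff: "\<xi> \<in> Cset j K \<eta> \<longleftrightarrow> (\<forall>v\<in>K. inner \<xi> v \<le> j \<eta> v)"
  unfolding Cset_def Jext_def by (auto split: if_splits)

lemma j0: "j \<eta> 0 = 0"
  using j_homog[of 2 0 \<eta>] K0 by simp

lemma jsub: assumes "v \<in> K" "w \<in> K" shows "j \<eta> (v + w) \<le> j \<eta> v + j \<eta> w"
proof -
  have h: "(1/2) *\<^sub>R (v + w) \<in> K" using assms by (intro Ksc Kadd) auto
  have "j \<eta> (v + w) = j \<eta> (2 *\<^sub>R ((1/2) *\<^sub>R (v + w)))" by simp
  also have "\<dots> = 2 * j \<eta> ((1 - 1/2) *\<^sub>R v + (1/2) *\<^sub>R w)"
    using j_homog[OF _ h, of 2 \<eta>] by (simp add: scaleR_add_right)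
  also have "\<dots> \<le> 2 * ((1 - 1/2) * j \<eta> v + (1/2) * j \<eta> w)"
    using convex_onD[OF j_convex, of "1/2" v w \<eta>] assms by simp
  finally show ?thesis by simp
qed

lemma core:
  assumes w: "w \<in> K" and vi: "\<And>v. v \<in> K \<Longrightarrow> inner \<xi> (v - w) \<le> j \<eta> v - j \<eta> w"
  shows "\<xi> \<in> Cset j K \<eta>" "inner \<xi> w = j \<eta> w"
proof -
  have "inner \<xi> (0 - w) \<le> j \<eta> 0 - j \<eta> w" using vi[OF K0] .
  hence a: "j \<eta> w \<le> inner \<xi> w" by (simp add: j0)
  have "inner \<xi> (2 *\<^sub>R w - w) \<le> j \<eta> (2 *\<^sub>R w) - j \<eta> w" using vi[OF Ksc[OF w]] by simp
  hence b: "inner \<xi> w \<le> j \<eta> w" using j_homog[OF _ w, of 2 \<eta>] by (simp add: algebra_simps)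
  show "inner \<xi> w = j \<eta> w" using a b by simp
  show "\<xi> \<in> Cset j K \<eta>" unfolding Cset_iff
  proof
    fix v assume v: "v \<in> K"
    have "inner \<xi> (v + w - w) \<le> j \<eta> (v + w) - j \<eta> w" using vi[OF Kadd[OF v w]] .
    thus "inner \<xi> v \<le> j \<eta> v" using jsub[OF v w, of \<eta>] by simp
  qed
qed

lemma sup_approx:
  assumes x: "x \<in> K" and e: "e > 0"
  shows "\<exists>\<xi>\<in>Cset j K \<eta>. inner \<xi> x \<ge> j \<eta> x - e"
proof -
  obtain L where L: "L-lipschitz_on K (j \<eta>)" using j_lip by blast
  have L0: "L \<ge> 0" using L by (simp add: lipschitz_on_def)
  define lam where "lam = e / (L*L + 1)"
  have lam: "lam > 0" unfolding lam_def using e by (simp add: add_nonneg_pos)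
  obtain xl where xl: "xl \<in> K" and vi: "\<forall>v\<in>K. inner (xl - x) (v - xl) + lam * j \<eta> v - lam * j \<eta> xl \<ge> 0"
    using prox_exists[OF Kconv K(2) Kne convex_on_cmul[OF less_imp_le[OF lam] j_convex]
        lipschitz_on_cmult_real_nonneg[OF L less_imp_le[OF lam]], of x] by auto
  define \<xi> where "\<xi> = (1/lam) *\<^sub>R (x - xl)"
  have vi': "inner \<xi> (v - xl) \<le> j \<eta> v - j \<eta> xl" if "v \<in> K" for v
  proof -
    have "inner (x - xl) (v - xl) \<le> lam * (j \<eta> v - j \<eta> xl)"
      using vi that by (simp add: inner_diff_left inner_diff_right algebra_simps)
    hence "(1/lam) * inner (x - xl) (v - xl) \<le> (1/lam) * (lam * (j \<eta> v - j \<eta> xl))"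
      using lam by (intro mult_left_mono) auto
    thus ?thesis using lam by (simp add: \<xi>_def)
  qed
  note c = core[OF xl vi']
  have "inner (xl - x) (x - xl) + lam * j \<eta> x - lam * j \<eta> xl \<ge> 0" using vi x by auto
  hence n1: "(norm (x - xl))^2 \<le> lam * (j \<eta> x - j \<eta> xl)"
    by (simp add: power2_norm_eq_inner inner_diff_left inner_diff_right inner_commute algebra_simps)
  have jd: "j \<eta> x - j \<eta> xl \<le> L * norm (x - xl)"
    using lipschitz_onD[OF L x xl] by (simp add: dist_norm dist_real_def)
  have n2: "norm (x - xl) \<le> lam * L"
  proof (cases "x = xl")
    case True thus ?thesis using lam L0 by simp
  next
    case False
    have "norm (x - xl) * norm (x - xl) \<le> (lam * L) * norm (x - xl)"
    proof -
      have "lam * (j \<eta> x - j \<eta> xl) \<le> lam * (L * norm (x - xl))"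
        using jd lam by (intro mult_left_mono) auto
      thus ?thesis using n1 by (simp add: power2_eq_square mult.assoc)
    qed
    thus ?thesis using False by simp
  qed
  have "inner \<xi> x = inner \<xi> xl + inner \<xi> (x - xl)" by (simp add: inner_diff_right)
  also have "inner \<xi> (x - xl) = (norm (x - xl))^2 / lam"
    by (simp add: \<xi>_def power2_norm_eq_inner)
  finally have "inner \<xi> x \<ge> j \<eta> xl" using c(2) lam by simp
  moreover have "j \<eta> xl \<ge> j \<eta> x - L * (lam * L)" using jd n2 L0
    by (smt (verit) mult_left_mono)
  moreover have "L * (lam * L) \<le> e"
  proof -
    have "L * (lam * L) = e * (L * L / (L * L + 1))" by (simp add: lam_def field_simps)
    also have "\<dots> \<le> e * 1" using e by (intro mult_left_mono) (auto simp: divide_le_eq, smt (verit) zero_le_square)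
    finally show ?thesis by simp
  qed
  ultimately show ?thesis using c(1) by (intro bexI[of _ \<xi>]) auto
qed

lemma normal_to_sol:
  assumes n: "- w \<in> normal_cone (Cset_t j K f \<eta> t) y"
  shows "w \<in> K" "f t - y \<in> Cset j K \<eta>" "inner (f t - y) w = j \<eta> w"
proof -
  have yin: "y \<in> Cset_t j K f \<eta> t" using n unfolding normal_cone_def by (auto split: if_splits)
  hence n': "\<forall>z\<in>Cset_t j K f \<eta> t. inner (- w) (z - y) \<le> 0" using n unfolding normal_cone_def by auto
  obtain \<xi>0 where \<xi>0: "\<xi>0 \<in> Cset j K \<eta>" "y = f t - \<xi>0" using yin unfolding Cset_t_def by auto
  have fy: "f t - y = \<xi>0" using \<xi>0 by simp
  have key: "inner w \<xi>' \<le> inner w \<xi>0" if "\<xi>' \<in> Cset j K \<eta>" for \<xi>'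
  proof -
    have "f t - \<xi>' \<in> Cset_t j K f \<eta> t" using that unfolding Cset_t_def by auto
    hence "inner (- w) (f t - \<xi>' - y) \<le> 0" using n' by blast
    thus ?thesis using \<xi>0 by (simp add: inner_diff_right)
  qed
  show wK: "w \<in> K"
  proof (rule ccontr)
    assume wn: "w \<notin> K"
    obtain p0 where p0: "p0 \<in> K" and pv: "\<forall>v\<in>K. inner (p0 - w) (v - p0) + 0 - 0 \<ge> 0"
      using prox_exists[OF Kconv K(2) Kne _ lipschitz_on_constant[of K 0], of w]
      by (auto simp: convex_on_const Kconv)
    define p where "p = w - p0"
    have pn: "p \<noteq> 0" using wn p0 by (auto simp: p_def)
    have "inner (p0 - w) (0 - p0) \<ge> 0" "inner (p0 - w) (2 *\<^sub>R p0 - p0) \<ge> 0"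
      using pv K0 Ksc[OF p0, of 2] by auto
    hence pp0: "inner p p0 = 0" by (simp add: p_def inner_diff_left inner_diff_right algebra_simps)
    have pK: "inner p v \<le> 0" if "v \<in> K" for v
    proof -
      have "inner (p0 - w) (v - p0) \<ge> 0" using pv that by auto
      thus ?thesis using pp0 by (simp add: p_def inner_diff_left inner_diff_right algebra_simps)
    qed
    have "\<xi>0 + p \<in> Cset j K \<eta>" using \<xi>0(1) pK unfolding Cset_iff by (auto simp: inner_add_left) (smt (verit))
    hence "inner w (\<xi>0 + p) \<le> inner w \<xi>0" by (rule key)
    hence "inner w p \<le> 0" by (simp add: inner_add_right)
    moreover have "inner w p = inner p p" using pp0 by (simp add: p_def inner_diff_left inner_commute)
    ultimately show False using pn by (smt (verit) inner_gt_zero_iff)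
  qed
  show "f t - y \<in> Cset j K \<eta>" using fy \<xi>0 by simp
  have le: "inner \<xi>0 w \<le> j \<eta> w" using \<xi>0(1) wK unfolding Cset_iff by auto
  have ge: "inner \<xi>0 w \<ge> j \<eta> w - e" if e: "e > 0" for e
  proof -
    obtain \<xi>' where "\<xi>' \<in> Cset j K \<eta>" "inner \<xi>' w \<ge> j \<eta> w - e" using sup_approx[OF wK e] by blast
    thus ?thesis using key[of \<xi>'] by (simp add: inner_commute)
  qed
  have "inner \<xi>0 w \<ge> j \<eta> w"
  proof (rule ccontr)
    assume "\<not> ?thesis"
    hence pos: "j \<eta> w - inner \<xi>0 w > 0" by simp
    from ge[OF half_gt_zero[OF pos]] pos show False by (simp add: field_simps)
  qed
  thus "inner (f t - y) w = j \<eta> w" using le fy by simp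
qed

lemma sol_to_normal:
  assumes w: "w \<in> K" and xi: "f t - y \<in> Cset j K \<eta>" and eq: "inner (f t - y) w = j \<eta> w"
  shows "- w \<in> normal_cone (Cset_t j K f \<eta> t) y"
proof -
  have yin: "y \<in> Cset_t j K f \<eta> t" unfolding Cset_t_def using xi by (intro image_eqI[of _ _ "f t - y"]) auto
  have "inner (- w) (z - y) \<le> 0" if z: "z \<in> Cset_t j K f \<eta> t" for z
  proof -
    obtain \<xi>' where \<xi>': "\<xi>' \<in> Cset j K \<eta>" "z = f t - \<xi>'" using z unfolding Cset_t_def image_iff by blast
    have "inner \<xi>' w \<le> j \<eta> w" using \<xi>'(1) w unfolding Cset_iff by auto
    thus ?thesis using eq \<xi>'(2) by (simp add: inner_diff_right inner_diff_left inner_commute)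
  qed
  thus ?thesis using yin unfolding normal_cone_def by auto
qed


lemma vi_exists:
  fixes A :: "'a \<Rightarrow> 'a"
  assumes mA: "mA > 0" and LA: "LA > 0"
    and A_mono: "\<And>u v. inner (A u - A v) (u - v) \<ge> mA * (norm (u - v))^2"
    and A_lip: "\<And>u v. norm (A u - A v) \<le> LA * norm (u - v)"
  shows "\<exists>w\<in>K. g - A w \<in> Cset j K \<eta> \<and> inner (g - A w) w = j \<eta> w"
proof -
  define \<rho> where "\<rho> = mA / LA^2"
  have \<rho>: "\<rho> > 0" using mA LA by (simp add: \<rho>_def)
  obtain L where L: "L-lipschitz_on K (j \<eta>)" using j_lip by blast
  define P where "P z = (SOME x. x \<in> K \<and> (\<forall>v\<in>K. inner (x - z) (v - x) + \<rho> * j \<eta> v - \<rho> * j \<eta> x \<ge> 0))" for z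
  have P: "P z \<in> K \<and> (\<forall>v\<in>K. inner (P z - z) (v - P z) + \<rho> * j \<eta> v - \<rho> * j \<eta> (P z) \<ge> 0)" for z
  proof -
    have "\<exists>x. x \<in> K \<and> (\<forall>v\<in>K. inner (x - z) (v - x) + \<rho> * j \<eta> v - \<rho> * j \<eta> x \<ge> 0)"
      using prox_exists[OF Kconv K(2) Kne convex_on_cmul[OF less_imp_le[OF \<rho>] j_convex]
        lipschitz_on_cmult_real_nonneg[OF L less_imp_le[OF \<rho>]], of z] by auto
    thus ?thesis unfolding P_def by (rule someI_ex)
  qed
  have Pne: "norm (P z1 - P z2) \<le> norm (z1 - z2)" for z1 z2
  proof -
    have "inner (P z1 - z1) (P z2 - P z1) + \<rho> * j \<eta> (P z2) - \<rho> * j \<eta> (P z1) \<ge> 0"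
         "inner (P z2 - z2) (P z1 - P z2) + \<rho> * j \<eta> (P z1) - \<rho> * j \<eta> (P z2) \<ge> 0"
      using P[of z1] P[of z2] by auto
    hence "inner (P z1 - z1) (P z2 - P z1) + inner (P z2 - z2) (P z1 - P z2) \<ge> 0" by linarith
    hence "inner (P z1 - P z2) (P z1 - P z2) \<le> inner (z1 - z2) (P z1 - P z2)"
      by (simp add: inner_diff_left inner_diff_right inner_commute algebra_simps)
    also have "\<dots> \<le> norm (z1 - z2) * norm (P z1 - P z2)" by (rule Cauchy_Schwarz_ineq2[THEN abs_le_D1])
    finally have "norm (P z1 - P z2) * norm (P z1 - P z2) \<le> norm (z1 - z2) * norm (P z1 - P z2)"
      by (simp add: power2_norm_eq_inner[symmetric] power2_eq_square)
    thus ?thesis by (cases "P z1 = P z2") auto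
  qed
  define T where "T w = P (w - \<rho> *\<^sub>R (A w - g))" for w
  define q where "q = 1 - mA^2 / LA^2"
  define c where "c = sqrt (max 0 q)"
  have c0: "0 \<le> c" unfolding c_def by simp
  have c1: "c < 1" unfolding c_def q_def using mA LA by (simp add: max_def)
  have contr: "dist (T w1) (T w2) \<le> c * dist w1 w2" for w1 w2
  proof -
    define d where "d = w1 - w2"
    define \<Delta> where "\<Delta> = A w1 - A w2"
    have e: "(w1 - \<rho> *\<^sub>R (A w1 - g)) - (w2 - \<rho> *\<^sub>R (A w2 - g)) = d - \<rho> *\<^sub>R \<Delta>"
      by (simp add: d_def \<Delta>_def algebra_simps)
    have m: "inner \<Delta> d \<ge> mA * (norm d)^2" using A_mono unfolding \<Delta>_def d_def by blast
    have l: "(norm \<Delta>)^2 \<le> (LA * norm d)^2" using A_lip[of w1 w2] unfolding \<Delta>_def d_def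
      by (intro power_mono) auto
    have "(norm (d - \<rho> *\<^sub>R \<Delta>))^2 = (norm d)^2 - 2 * \<rho> * inner \<Delta> d + \<rho>^2 * (norm \<Delta>)^2"
      by (simp only: power2_norm_eq_inner) (simp add: inner_diff_left inner_diff_right inner_commute algebra_simps power2_eq_square)
    also have "\<dots> \<le> (norm d)^2 - 2 * \<rho> * (mA * (norm d)^2) + \<rho>^2 * (LA * norm d)^2"
      using m l \<rho> by (intro add_mono diff_mono mult_left_mono) auto
    also have "\<dots> = q * (norm d)^2" using LA by (simp add: q_def \<rho>_def field_simps power2_eq_square)
    also have "\<dots> \<le> max 0 q * (norm d)^2" by (intro mult_right_mono) auto
    finally have "(norm (d - \<rho> *\<^sub>R \<Delta>))^2 \<le> max 0 q * (norm d)^2" .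
    hence "sqrt ((norm (d - \<rho> *\<^sub>R \<Delta>))^2) \<le> sqrt (max 0 q * (norm d)^2)" by (rule real_sqrt_le_mono)
    hence "norm (d - \<rho> *\<^sub>R \<Delta>) \<le> c * norm d" by (simp add: c_def real_sqrt_mult)
    moreover have "norm (T w1 - T w2) \<le> norm (d - \<rho> *\<^sub>R \<Delta>)" unfolding T_def using Pne e by metis
    ultimately show ?thesis by (simp add: dist_norm d_def)
  qed
  obtain x where x: "T x = x" using banach_fix_type[OF c0 c1] contr by blast
  have xK: "x \<in> K" using P x unfolding T_def by metis
  have vi: "inner (g - A x) (v - x) \<le> j \<eta> v - j \<eta> x" if v: "v \<in> K" for v
  proof -
    have "inner (x - (x - \<rho> *\<^sub>R (A x - g))) (v - x) + \<rho> * j \<eta> v - \<rho> * j \<eta> x \<ge> 0"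
      using P[of "x - \<rho> *\<^sub>R (A x - g)"] v x unfolding T_def by metis
    hence "\<rho> * (inner (g - A x) (v - x)) \<le> \<rho> * (j \<eta> v - j \<eta> x)"
      by (simp add: inner_diff_left inner_diff_right algebra_simps)
    thus ?thesis using \<rho> by simp
  qed
  show ?thesis using core[OF xK vi] xK by blast
qed

lemma sol_est:
  fixes A :: "'a \<Rightarrow> 'a"
  assumes mA: "mA > 0" and al: "\<alpha> \<ge> 0"
    and A_mono: "\<And>u v. inner (A u - A v) (u - v) \<ge> mA * (norm (u - v))^2"
    and w1: "w1 \<in> K" "g1 - A w1 \<in> Cset j K \<eta>1" "inner (g1 - A w1) w1 = j \<eta>1 w1"
    and w2: "w2 \<in> K" "g2 - A w2 \<in> Cset j K \<eta>2" "inner (g2 - A w2) w2 = j \<eta>2 w2"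
  shows "mA * norm (w1 - w2) \<le> norm (g1 - g2) + \<alpha> * norm (\<eta>1 - \<eta>2)"
proof (cases "w1 = w2")
  case True thus ?thesis using al by simp
next
  case False
  define d where "d = w1 - w2"
  have a1: "inner (g1 - A w1) w2 \<le> j \<eta>1 w2" using w1(2) w2(1) unfolding Cset_iff by auto
  have a2: "inner (g2 - A w2) w1 \<le> j \<eta>2 w1" using w2(2) w1(1) unfolding Cset_iff by auto
  have "inner (g1 - A w1) (w2 - w1) + inner (g2 - A w2) (w1 - w2)
      \<le> j \<eta>1 w2 - j \<eta>1 w1 + j \<eta>2 w1 - j \<eta>2 w2"
    using a1 a2 w1(3) w2(3) by (simp add: inner_diff_right)
  also have "\<dots> \<le> \<alpha> * norm (\<eta>1 - \<eta>2) * norm d" unfolding d_def by (rule j_mix[OF w1(1) w2(1)])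
  finally have h: "inner (g1 - A w1) (w2 - w1) + inner (g2 - A w2) (w1 - w2) \<le> \<alpha> * norm (\<eta>1 - \<eta>2) * norm d" .
  have eq: "inner (g1 - A w1) (w2 - w1) + inner (g2 - A w2) (w1 - w2)
      = inner (A w1 - A w2) (w1 - w2) - inner (g1 - g2) d"
    by (simp add: d_def inner_diff_left inner_diff_right algebra_simps)
  have "inner (g1 - g2) d \<le> norm (g1 - g2) * norm d" by (rule Cauchy_Schwarz_ineq2[THEN abs_le_D1])
  hence "mA * (norm d)^2 \<le> norm (g1 - g2) * norm d + \<alpha> * norm (\<eta>1 - \<eta>2) * norm d"
    using h eq A_mono[of w1 w2] unfolding d_def by linarith
  hence "(mA * norm d) * norm d \<le> (norm (g1 - g2) + \<alpha> * norm (\<eta>1 - \<eta>2)) * norm d"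
    by (simp add: power2_eq_square algebra_simps)
  moreover have "norm d > 0" using False by (simp add: d_def)
  ultimately show ?thesis unfolding d_def by simp
qed

end



lemma integral_pow_real:
  fixes t :: real assumes "0 \<le> t"
  shows "integral {0..t} (\<lambda>s. s^n) = t^(Suc n) / real (Suc n)"
proof -
  have "((\<lambda>s. s^n) has_integral (t^(Suc n) / real (Suc n) - 0^(Suc n) / real (Suc n))) {0..t}"
  proof (rule fundamental_theorem_of_calculus[OF assms])
    fix x :: real assume "x \<in> {0..t}"
    have "((\<lambda>s. s^(Suc n)) has_real_derivative (real (Suc n) * x^n)) (at x within {0..t})"
      using DERIV_pow[of "Suc n" x] by (simp add: has_field_derivative_at_within)
    hence "((\<lambda>s. s^(Suc n) / real (Suc n)) has_real_derivative (real (Suc n) * x^n / real (Suc n))) (at x within {0..t})"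
      by (rule DERIV_cdivide)
    thus "((\<lambda>s. s^(Suc n) / real (Suc n)) has_vector_derivative x^n) (at x within {0..t})"
      by (simp add: has_real_derivative_iff_has_vector_derivative[symmetric])
  qed
  thus ?thesis by (simp add: integral_unique)
qed

lemma iter_bound:
  fixes \<psi> :: "nat \<Rightarrow> real \<Rightarrow> real"
  assumes cont: "\<And>n. continuous_on {0..T} (\<psi> n)"
    and b0: "\<And>t. t \<in> {0..T} \<Longrightarrow> \<psi> 0 t \<le> M"
    and step: "\<And>n t. t \<in> {0..T} \<Longrightarrow> \<psi> (Suc n) t \<le> C * integral {0..t} (\<psi> n)"
    and C: "C \<ge> 0"
  shows "t \<in> {0..T} \<Longrightarrow> \<psi> n t \<le> M * (C*t)^n / fact n"
proof (induction n arbitrary: t)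
  case 0 thus ?case using b0 by simp
next
  case (Suc n)
  have sub: "{0..t} \<subseteq> {0..T}" using Suc.prems by auto
  have "\<psi> (Suc n) t \<le> C * integral {0..t} (\<psi> n)" using step Suc.prems by blast
  also have "\<dots> \<le> C * integral {0..t} (\<lambda>s. (M * C^n / fact n) * s^n)"
  proof (intro mult_left_mono C integral_le integrable_continuous_real)
    show "continuous_on {0..t} (\<psi> n)" using continuous_on_subset[OF cont sub] .
    show "continuous_on {0..t} (\<lambda>s. (M * C^n / fact n) * s^n)" by (intro continuous_intros)
    fix s assume s: "s \<in> {0..t}"
    have "\<psi> n s \<le> M * (C * s) ^ n / fact n" using Suc.IH s sub by blast
    thus "\<psi> n s \<le> (M * C^n / fact n) * s^n" by (simp add: power_mult_distrib)
  qed
  also have "\<dots> = C * ((M * C^n / fact n) * (t^(Suc n) / real (Suc n)))"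
    using Suc.prems by (simp add: integral_pow_real)
  also have "\<dots> = M * (C*t)^(Suc n) / fact (Suc n)"
    by (simp add: power_mult_distrib field_simps)
  finally show ?case .
qed

lemma pow_fact_zero: "(\<lambda>n. M * x^n / fact n :: real) \<longlonglongrightarrow> 0"
proof -
  have "(\<lambda>n. inverse (fact n) * x^n) \<longlonglongrightarrow> 0" by (rule summable_LIMSEQ_zero[OF summable_exp])
  from tendsto_mult_right_zero[OF this, of M] show ?thesis by (simp add: field_simps)
qed

lemma gronwall0:
  fixes \<phi> :: "real \<Rightarrow> real"
  assumes T: "0 \<le> T" and cont: "continuous_on {0..T} \<phi>" and nn: "\<And>t. t \<in> {0..T} \<Longrightarrow> 0 \<le> \<phi> t"
    and ineq: "\<And>t. t \<in> {0..T} \<Longrightarrow> \<phi> t \<le> C * integral {0..t} \<phi>" and C: "C \<ge> 0"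
    and t: "t \<in> {0..T}"
  shows "\<phi> t = 0"
proof -
  obtain x where "x \<in> {0..T}" "\<forall>y\<in>{0..T}. \<phi> y \<le> \<phi> x"
    using continuous_attains_sup[OF compact_Icc _ cont] T by auto
  hence b: "\<And>y. y \<in> {0..T} \<Longrightarrow> \<phi> y \<le> \<phi> x" by auto
  have "\<phi> t \<le> \<phi> x * (C*t)^n / fact n" for n
    by (rule iter_bound[where \<psi>="\<lambda>_. \<phi>", OF cont b ineq C t])
  hence "\<phi> t \<le> 0" using LIMSEQ_le_const[OF pow_fact_zero[of "\<phi> x" "C * t"], of "\<phi> t"] by auto
  thus ?thesis using nn[OF t] by simp
qed



locale prob = jK K j \<alpha> for K :: "'a::{real_inner,complete_space} set" and j \<alpha> +
  fixes I :: "real set" and A B :: "'a \<Rightarrow> 'a" and S :: "(real \<Rightarrow> 'a) \<Rightarrow> real \<Rightarrow> 'a"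
    and f :: "real \<Rightarrow> 'a" and u0 :: 'a and mA LA LB :: real
  assumes I0: "0 \<in> I" and Isub: "\<And>T. T \<in> I \<Longrightarrow> {0..T} \<subseteq> I" and Ipos: "\<And>t. t \<in> I \<Longrightarrow> 0 \<le> t"
    and Iloc: "\<And>t. t \<in> I \<Longrightarrow> \<exists>T\<in>I. t \<le> T \<and> at t within I = at t within {0..T}"
    and mA: "mA > 0" and LA: "LA > 0"
    and A_mono: "\<And>u v. inner (A u - A v) (u - v) \<ge> mA * (norm (u - v))^2"
    and A_lip: "\<And>u v. norm (A u - A v) \<le> LA * norm (u - v)"
    and f: "continuous_on I f"
    and B: "LB-lipschitz_on UNIV B"
    and S_cont: "\<And>w. continuous_on I w \<Longrightarrow> continuous_on I (S w)"
    and S_hist: "history_dependent I S"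
    and al: "\<alpha> \<ge> 0"
begin

definition W where "W \<eta> g = (SOME w. w \<in> K \<and> g - A w \<in> Cset j K \<eta> \<and> inner (g - A w) w = j \<eta> w)"

lemma Wp: "W \<eta> g \<in> K" "g - A (W \<eta> g) \<in> Cset j K \<eta>" "inner (g - A (W \<eta> g)) (W \<eta> g) = j \<eta> (W \<eta> g)"
proof -
  have "\<exists>w. w \<in> K \<and> g - A w \<in> Cset j K \<eta> \<and> inner (g - A w) w = j \<eta> w"
    using vi_exists[OF mA LA A_mono A_lip, of g \<eta>] by blast
  from someI_ex[OF this] show "W \<eta> g \<in> K" "g - A (W \<eta> g) \<in> Cset j K \<eta>" "inner (g - A (W \<eta> g)) (W \<eta> g) = j \<eta> (W \<eta> g)"
    unfolding W_def by blast+
qed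

lemma W_lip: "mA * norm (W \<eta>1 g1 - W \<eta>2 g2) \<le> norm (g1 - g2) + \<alpha> * norm (\<eta>1 - \<eta>2)"
  by (rule sol_est[OF mA al A_mono Wp Wp])

lemma LB0: "LB \<ge> 0" using B by (simp add: lipschitz_on_def)

lemma B_lip: "norm (B x - B y) \<le> LB * norm (x - y)"
  using lipschitz_onD[OF B] by (simp add: dist_norm)

lemma cont_loc:
  assumes "\<And>T. T \<in> I \<Longrightarrow> continuous_on {0..T} g"
  shows "continuous_on I g"
  unfolding continuous_on_eq_continuous_within
proof
  fix t assume t: "t \<in> I"
  obtain T where T: "T \<in> I" "t \<le> T" "at t within I = at t within {0..T}" using Iloc[OF t] by blast
  have "t \<in> {0..T}" using T Ipos[OF t] by auto
  hence "continuous (at t within {0..T}) g" using assms[OF T(1)] by (simp add: continuous_on_eq_continuous_within)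
  thus "continuous (at t within I) g" using T(3) by (simp add: continuous_within)
qed

lemma Ant_cont: fixes w :: "real \<Rightarrow> 'a" assumes w: "continuous_on I w" shows "continuous_on I (Ant w)"
proof (rule cont_loc)
  fix T assume T: "T \<in> I"
  have wT: "continuous_on {0..T} w" using continuous_on_subset[OF w Isub[OF T]] .
  show "continuous_on {0..T} (Ant w)" unfolding continuous_on_eq_continuous_within
    using Ant_deriv[OF wT] has_vector_derivative_continuous by blast
qed

lemma hist:
  assumes T: "T \<in> I"
  shows "\<exists>L>0. \<forall>w1 w2. continuous_on I w1 \<and> continuous_on I w2 \<longrightarrow>
           (\<forall>t\<in>{0..T}. norm (S w1 t - S w2 t) \<le> L * integral {0..t} (\<lambda>s. norm (w1 s - w2 s)))"
  using S_hist Isub[OF T] unfolding history_dependent_def by (meson compact_Icc)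

definition Lam where "Lam w t = W (u0 + Ant w t) (f t - B (u0 + Ant w t) - S w t)"

lemma Lam_cont: assumes w: "continuous_on I w" shows "continuous_on I (Lam w)"
proof -
  define \<eta> where "\<eta> t = u0 + Ant w t" for t
  define g where "g t = f t - B (\<eta> t) - S w t" for t
  have c\<eta>: "continuous_on I \<eta>" unfolding \<eta>_def by (intro continuous_intros Ant_cont w)
  have cB: "continuous_on UNIV B" by (rule lipschitz_on_continuous_on[OF B])
  have cg: "continuous_on I g" unfolding g_def
    by (intro continuous_intros f S_cont w continuous_on_compose2[OF cB c\<eta>]) auto
  show ?thesis unfolding continuous_on_def
  proof
    fix t assume t: "t \<in> I"
    have l1: "(\<eta> \<longlongrightarrow> \<eta> t) (at t within I)" using c\<eta> t by (simp add: continuous_on_def)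
    have l2: "(g \<longlongrightarrow> g t) (at t within I)" using cg t by (simp add: continuous_on_def)
    have "((\<lambda>s. (norm (g s - g t) + \<alpha> * norm (\<eta> s - \<eta> t)) / mA) \<longlongrightarrow> (norm (g t - g t) + \<alpha> * norm (\<eta> t - \<eta> t)) / mA) (at t within I)"
      by (intro tendsto_intros l1 l2) (use mA in auto)
    hence l3: "((\<lambda>s. (norm (g s - g t) + \<alpha> * norm (\<eta> s - \<eta> t)) / mA) \<longlongrightarrow> 0) (at t within I)" by simp
    have "((\<lambda>s. Lam w s - Lam w t) \<longlongrightarrow> 0) (at t within I)"
    proof (rule Lim_null_comparison[OF _ l3])
      show "\<forall>\<^sub>F s in at t within I. norm (Lam w s - Lam w t) \<le> (norm (g s - g t) + \<alpha> * norm (\<eta> s - \<eta> t)) / mA"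
      proof (intro always_eventually allI)
        fix s
        have "mA * norm (Lam w s - Lam w t) \<le> norm (g s - g t) + \<alpha> * norm (\<eta> s - \<eta> t)"
          unfolding Lam_def g_def \<eta>_def by (rule W_lip)
        thus "norm (Lam w s - Lam w t) \<le> (norm (g s - g t) + \<alpha> * norm (\<eta> s - \<eta> t)) / mA"
          using mA by (simp add: pos_le_divide_eq mult.commute)
      qed
    qed
    thus "(Lam w \<longlongrightarrow> Lam w t) (at t within I)" by (rule LIM_zero_cancel)
  qed
qed

lemma Lam_est:
  assumes L: "\<forall>w1 w2. continuous_on I w1 \<and> continuous_on I w2 \<longrightarrow>
           (\<forall>t\<in>{0..T}. norm (S w1 t - S w2 t) \<le> L * integral {0..t} (\<lambda>s. norm (w1 s - w2 s)))"
    and T: "T \<in> I" and w1: "continuous_on I w1" and w2: "continuous_on I w2" and t: "t \<in> {0..T}"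
  shows "norm (Lam w1 t - Lam w2 t) \<le> ((LB + \<alpha> + L) / mA) * integral {0..t} (\<lambda>s. norm (w1 s - w2 s))"
proof -
  define Q where "Q = integral {0..t} (\<lambda>s. norm (w1 s - w2 s))"
  have sub: "{0..t} \<subseteq> I" using Isub[OF T] t by auto
  have h\<eta>: "norm ((u0 + Ant w1 t) - (u0 + Ant w2 t)) \<le> Q"
    unfolding Q_def using Ant_diff_bound[OF continuous_on_subset[OF w1 sub] continuous_on_subset[OF w2 sub]] by simp
  have hS: "norm (S w1 t - S w2 t) \<le> L * Q" unfolding Q_def using L w1 w2 t by blast
  have hB: "norm (B (u0 + Ant w1 t) - B (u0 + Ant w2 t)) \<le> LB * Q"
    using B_lip[of "u0 + Ant w1 t" "u0 + Ant w2 t"] mult_left_mono[OF h\<eta> LB0] by linarith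
  have "norm ((f t - B (u0 + Ant w1 t) - S w1 t) - (f t - B (u0 + Ant w2 t) - S w2 t))
      \<le> norm (B (u0 + Ant w1 t) - B (u0 + Ant w2 t)) + norm (S w1 t - S w2 t)"
  proof -
    have e: "(f t - B (u0 + Ant w1 t) - S w1 t) - (f t - B (u0 + Ant w2 t) - S w2 t)
        = - (B (u0 + Ant w1 t) - B (u0 + Ant w2 t)) - (S w1 t - S w2 t)" by (simp add: algebra_simps)
    show ?thesis unfolding e using norm_triangle_ineq4[of "- (B (u0 + Ant w1 t) - B (u0 + Ant w2 t))" "S w1 t - S w2 t"]
      by (simp add: norm_minus_commute)
  qed
  hence hg: "norm ((f t - B (u0 + Ant w1 t) - S w1 t) - (f t - B (u0 + Ant w2 t) - S w2 t)) \<le> LB * Q + L * Q"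
    using hB hS by linarith
  have "mA * norm (Lam w1 t - Lam w2 t) \<le> (LB * Q + L * Q) + \<alpha> * Q"
  proof -
    have "mA * norm (Lam w1 t - Lam w2 t) \<le> norm ((f t - B (u0 + Ant w1 t) - S w1 t) - (f t - B (u0 + Ant w2 t) - S w2 t))
        + \<alpha> * norm ((u0 + Ant w1 t) - (u0 + Ant w2 t))" unfolding Lam_def by (rule W_lip)
    thus ?thesis using hg mult_left_mono[OF h\<eta> al] by linarith
  qed
  hence "mA * norm (Lam w1 t - Lam w2 t) \<le> (LB + \<alpha> + L) * Q" by (simp add: algebra_simps)
  thus ?thesis unfolding Q_def[symmetric] using mA by (simp add: field_simps mult.commute)
qed


definition ws :: "nat \<Rightarrow> real \<Rightarrow> 'a" where "ws n = (Lam ^^ n) (\<lambda>_. 0)"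

lemma ws_Suc: "ws (Suc n) = Lam (ws n)" by (simp add: ws_def)

lemma ws_cont: "continuous_on I (ws n)"
  by (induction n) (auto simp: ws_def intro: Lam_cont)

lemma ws_unif:
  assumes T: "T \<in> I"
  shows "uniform_limit {0..T} ws (\<lambda>x. lim (\<lambda>n. ws n x)) sequentially"
proof -
  obtain L where L: "L > 0" "\<forall>w1 w2. continuous_on I w1 \<and> continuous_on I w2 \<longrightarrow>
           (\<forall>t\<in>{0..T}. norm (S w1 t - S w2 t) \<le> L * integral {0..t} (\<lambda>s. norm (w1 s - w2 s)))"
    using hist[OF T] by blast
  define C where "C = (LB + \<alpha> + L) / mA"
  have C0: "C \<ge> 0" using LB0 al L mA by (simp add: C_def)
  define \<psi> where "\<psi> n t = norm (ws (Suc n) t - ws n t)" for n t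
  have T0: "0 \<le> T" using Ipos T by blast
  have wsT: "continuous_on {0..T} (ws n)" for n using continuous_on_subset[OF ws_cont Isub[OF T]] .
  have c\<psi>: "continuous_on {0..T} (\<psi> n)" for n unfolding \<psi>_def by (intro continuous_intros wsT)
  obtain x0 where x0: "x0 \<in> {0..T}" "\<forall>y\<in>{0..T}. \<psi> 0 y \<le> \<psi> 0 x0"
    using continuous_attains_sup[OF compact_Icc _ c\<psi>[of 0]] T0 by auto
  define M where "M = \<psi> 0 x0"
  have M0: "M \<ge> 0" by (simp add: M_def \<psi>_def)
  have step: "\<psi> (Suc n) t \<le> C * integral {0..t} (\<psi> n)" if t: "t \<in> {0..T}" for n t
  proof -
    have "\<psi> (Suc n) t = norm (Lam (ws (Suc n)) t - Lam (ws n) t)" by (simp add: \<psi>_def ws_Suc)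
    also have "\<dots> \<le> C * integral {0..t} (\<lambda>s. norm (ws (Suc n) s - ws n s))"
      unfolding C_def by (rule Lam_est[OF L(2) T ws_cont ws_cont t])
    finally show ?thesis by (simp add: \<psi>_def[abs_def])
  qed
  define a where "a n = M * (C*T)^n / fact n" for n
  have bd: "\<psi> n t \<le> a n" if t: "t \<in> {0..T}" for n t
  proof -
    have "\<psi> n t \<le> M * (C*t)^n / fact n"
      by (rule iter_bound[where \<psi>=\<psi> and M=M and T=T and C=C, OF c\<psi> _ step C0 t]) (use x0 M_def in auto)
    also have "\<dots> \<le> M * (C*T)^n / fact n"
      using t C0 M0 by (intro divide_right_mono mult_left_mono power_mono mult_left_mono) auto
    finally show ?thesis by (simp add: a_def)
  qed
  have sa: "summable a"
  proof -
    have "summable (\<lambda>n. M * (inverse (fact n) * (C*T)^n))" by (intro summable_mult summable_exp)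
    moreover have "(\<lambda>n. M * (inverse (fact n) * (C*T)^n)) = a" by (rule ext) (simp add: a_def field_simps)
    ultimately show ?thesis by simp
  qed
  have cau: "uniformly_Cauchy_on {0..T} ws"
  proof (rule uniformly_Cauchy_onI')
    fix e :: real assume e: "e > 0"
    have "Cauchy (\<lambda>n. sum a {..<n})" using sa by (simp add: summable_iff_convergent Cauchy_convergent_iff)
    then obtain N where N: "\<And>m n. m \<ge> N \<Longrightarrow> n \<ge> N \<Longrightarrow> dist (sum a {..<m}) (sum a {..<n}) < e"
      using e unfolding Cauchy_def by blast
    show "\<exists>M. \<forall>x\<in>{0..T}. \<forall>m\<ge>M. \<forall>n>m. dist (ws m x) (ws n x) < e"
    proof (intro exI[of _ N] ballI allI impI)
      fix x m n assume x: "x \<in> {0..T}" and m: "N \<le> m" and n: "m < n"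
      have "ws n x - ws m x = (\<Sum>k = m..<n. ws (Suc k) x - ws k x)"
        using sum_Suc_diff'[of m n "\<lambda>k. ws k x"] n by simp
      hence "dist (ws m x) (ws n x) = norm (\<Sum>k = m..<n. ws (Suc k) x - ws k x)"
        by (metis dist_norm dist_commute)
      also have "\<dots> \<le> (\<Sum>k = m..<n. \<psi> k x)" unfolding \<psi>_def by (rule norm_sum)
      also have "\<dots> \<le> (\<Sum>k = m..<n. a k)" by (intro sum_mono bd x)
      also have "\<dots> = sum a {..<n} - sum a {..<m}"
        using sum_diff_nat_ivl[of 0 m n a] n by (simp add: lessThan_atLeast0)
      also have "\<dots> < e" using N[OF m, of n] m n by (simp add: dist_real_def)
      finally show "dist (ws m x) (ws n x) < e" .
    qed
  qed
  from Cauchy_uniformly_convergent[OF cau] show ?thesis by (simp add: uniformly_convergent_uniform_limit_iff)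
qed

definition wl where "wl x = lim (\<lambda>n. ws n x)"

lemma wl_unif: "T \<in> I \<Longrightarrow> uniform_limit {0..T} ws wl sequentially"
  using ws_unif unfolding wl_def[abs_def] by blast

lemma wl_cont: "continuous_on I wl"
proof (rule cont_loc)
  fix T assume T: "T \<in> I"
  have "\<forall>\<^sub>F n in sequentially. continuous_on {0..T} (ws n)"
    using continuous_on_subset[OF ws_cont Isub[OF T]] by simp
  from uniform_limit_theorem[OF this wl_unif[OF T]] show "continuous_on {0..T} wl" by simp
qed

lemma wl_fix: assumes t: "t \<in> I" shows "Lam wl t = wl t"
proof -
  obtain L where L: "L > 0" "\<forall>w1 w2. continuous_on I w1 \<and> continuous_on I w2 \<longrightarrow>
           (\<forall>s\<in>{0..t}. norm (S w1 s - S w2 s) \<le> L * integral {0..s} (\<lambda>r. norm (w1 r - w2 r)))"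
    using hist[OF t] by blast
  define C where "C = (LB + \<alpha> + L) / mA"
  have t0: "0 \<le> t" using Ipos t by blast
  have tt: "t \<in> {0..t}" using t0 by simp
  have ul: "uniform_limit {0..t} ws wl sequentially" by (rule wl_unif[OF t])
  have "(\<lambda>n. ws n t) \<longlonglongrightarrow> wl t" by (rule tendsto_uniform_limitI[OF ul tt])
  hence lim2: "(\<lambda>n. Lam (ws n) t) \<longlonglongrightarrow> wl t" using LIMSEQ_Suc by (fastforce simp: ws_Suc)
  have wlt: "continuous_on {0..t} wl" using continuous_on_subset[OF wl_cont Isub[OF t]] .
  have wst: "continuous_on {0..t} (ws n)" for n using continuous_on_subset[OF ws_cont Isub[OF t]] .
  have ints: "(\<lambda>n. integral {0..t} (\<lambda>s. norm (ws n s - wl s))) \<longlonglongrightarrow> 0"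
  proof (rule tendstoI)
    fix e :: real assume e: "e > 0"
    have "e / (t + 1) > 0" using e t0 by simp
    from uniform_limitD[OF ul this]
    show "\<forall>\<^sub>F n in sequentially. dist (integral {0..t} (\<lambda>s. norm (ws n s - wl s))) 0 < e"
    proof eventually_elim
      case (elim n)
      have "integral {0..t} (\<lambda>s. norm (ws n s - wl s)) \<le> integral {0..t} (\<lambda>s. e / (t + 1))"
        using elim by (intro integral_le integrable_continuous_real continuous_intros wst wlt)
           (auto simp: dist_norm less_imp_le)
      also have "\<dots> = t * (e / (t + 1))" using t0 by simp
      also have "\<dots> < e" using e t0 by (simp add: field_simps)
      finally have "integral {0..t} (\<lambda>s. norm (ws n s - wl s)) < e" .
      moreover have "integral {0..t} (\<lambda>s. norm (ws n s - wl s)) \<ge> 0"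
        by (intro integral_nonneg integrable_continuous_real continuous_intros wst wlt) auto
      ultimately show ?case by (simp add: dist_real_def)
    qed
  qed
  have "(\<lambda>n. Lam (ws n) t - Lam wl t) \<longlonglongrightarrow> 0"
  proof (rule Lim_null_comparison)
    show "\<forall>\<^sub>F n in sequentially. norm (Lam (ws n) t - Lam wl t) \<le> C * integral {0..t} (\<lambda>s. norm (ws n s - wl s))"
      unfolding C_def by (intro always_eventually allI Lam_est[OF L(2) t ws_cont wl_cont tt])
    show "(\<lambda>n. C * integral {0..t} (\<lambda>s. norm (ws n s - wl s))) \<longlonglongrightarrow> 0"
      using tendsto_mult_right_zero[OF ints, of C] by simp
  qed
  hence "(\<lambda>n. Lam (ws n) t) \<longlonglongrightarrow> Lam wl t" by (rule LIM_zero_cancel)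
  from LIMSEQ_unique[OF this lim2] show ?thesis .
qed

lemma existence: "\<exists>u u'. is_solution I A B S f j K u0 u u' \<and> (\<forall>t\<in>I. u' t \<in> K)"
proof (intro exI conjI)
  define u where "u t = u0 + Ant wl t" for t
  have key: "wl t \<in> K \<and> f t - (A (wl t) + B (u t) + S wl t) \<in> Cset j K (u t)
      \<and> inner (f t - (A (wl t) + B (u t) + S wl t)) (wl t) = j (u t) (wl t)" if t: "t \<in> I" for t
  proof -
    define g where "g = f t - B (u t) - S wl t"
    have e: "wl t = W (u t) g" using wl_fix[OF t] by (simp add: Lam_def u_def g_def)
    have e2: "f t - (A (wl t) + B (u t) + S wl t) = g - A (W (u t) g)" by (simp add: g_def e algebra_simps)
    show ?thesis unfolding e2 using Wp[where \<eta>="u t" and g=g] e by simp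
  qed
  show "\<forall>t\<in>I. wl t \<in> K" using key by blast
  show "is_solution I A B S f j K u0 u wl"
    unfolding is_solution_def
  proof (intro conjI ballI)
    fix t assume t: "t \<in> I"
    obtain T where T: "T \<in> I" "t \<le> T" "at t within I = at t within {0..T}" using Iloc[OF t] by blast
    have tT: "t \<in> {0..T}" using T Ipos[OF t] by auto
    have "(Ant wl has_vector_derivative wl t) (at t within {0..T})"
      by (rule Ant_deriv[OF continuous_on_subset[OF wl_cont Isub[OF T(1)]] tT])
    hence "(u has_vector_derivative wl t) (at t within {0..T})"
      unfolding u_def[abs_def] using has_vector_derivative_add[OF has_vector_derivative_const] by fastforce
    thus "(u has_vector_derivative wl t) (at t within I)" using T(3) by simp
  next
    show "continuous_on I wl" by (rule wl_cont)
  next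
    fix t assume t: "t \<in> I"
    show "- wl t \<in> normal_cone (Cset_t j K f (u t) t) (A (wl t) + B (u t) + S wl t)"
      using key[OF t] by (intro sol_to_normal) auto
  next
    show "u 0 = u0" by (simp add: u_def Ant_0)
  qed
qed


lemma sol_props:
  assumes sol: "is_solution I A B S f j K u0 u u'" and t: "t \<in> I"
  shows "u' t \<in> K" "(f t - B (u t) - S u' t) - A (u' t) \<in> Cset j K (u t)"
    "inner ((f t - B (u t) - S u' t) - A (u' t)) (u' t) = j (u t) (u' t)"
proof -
  have n: "- u' t \<in> normal_cone (Cset_t j K f (u t) t) (A (u' t) + B (u t) + S u' t)"
    using sol t unfolding is_solution_def by blast
  have e: "(f t - B (u t) - S u' t) - A (u' t) = f t - (A (u' t) + B (u t) + S u' t)" by (simp add: algebra_simps)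
  show "u' t \<in> K" "(f t - B (u t) - S u' t) - A (u' t) \<in> Cset j K (u t)"
    "inner ((f t - B (u t) - S u' t) - A (u' t)) (u' t) = j (u t) (u' t)"
    unfolding e using normal_to_sol[OF n] by auto
qed

lemma sol_diff_bound:
  assumes su: "is_solution I A B S f j K u0 u u'" and sv: "is_solution I A B S f j K u0 v v'"
    and s: "s \<in> I"
  shows "norm (u s - v s) \<le> integral {0..s} (\<lambda>r. norm (u' r - v' r))"
proof -
  have s0: "0 \<le> s" using Ipos s by blast
  have sub: "{0..s} \<subseteq> I" using Isub s by blast
  have du: "(u has_vector_derivative u' r) (at r within {0..s})" if "r \<in> {0..s}" for r
    using su sub that unfolding is_solution_def by (blast intro: has_vector_derivative_within_subset)
  have dv: "(v has_vector_derivative v' r) (at r within {0..s})" if "r \<in> {0..s}" for r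
    using sv sub that unfolding is_solution_def by (blast intro: has_vector_derivative_within_subset)
  have cu: "continuous_on {0..s} u'" using su sub unfolding is_solution_def by (blast intro: continuous_on_subset)
  have cv: "continuous_on {0..s} v'" using sv sub unfolding is_solution_def by (blast intro: continuous_on_subset)
  have u0: "u 0 = u0" "v 0 = u0" using su sv unfolding is_solution_def by auto
  show ?thesis
  proof (rule weak_norm_bound)
    fix e
    have "inner (u s - v s) e = inner (u s - u 0) e - inner (v s - v 0) e" using u0 by (simp add: inner_diff_left)
    also have "\<dots> = integral {0..s} (\<lambda>r. inner (u' r) e) - integral {0..s} (\<lambda>r. inner (v' r) e)"
      using ftc_weak[OF s0 du] ftc_weak[OF s0 dv] by simp
    also have "\<dots> = integral {0..s} (\<lambda>r. inner (u' r - v' r) e)"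
      unfolding inner_diff_left
      by (rule integral_diff[symmetric]) (auto intro!: integrable_continuous_real continuous_intros cu cv)
    finally show "inner (u s - v s) e = integral {0..s} (\<lambda>r. inner (u' r - v' r) e)" .
  qed (auto intro!: continuous_intros cu cv)
qed

lemma uniqueness:
  assumes su: "is_solution I A B S f j K u0 u u'" and sv: "is_solution I A B S f j K u0 v v'"
    and t: "t \<in> I"
  shows "u t = v t"
proof -
  obtain L where L: "L > 0" "\<forall>w1 w2. continuous_on I w1 \<and> continuous_on I w2 \<longrightarrow>
           (\<forall>s\<in>{0..t}. norm (S w1 s - S w2 s) \<le> L * integral {0..s} (\<lambda>r. norm (w1 r - w2 r)))"
    using hist[OF t] by blast
  define C where "C = (LB + \<alpha> + L) / mA"
  have C0: "C \<ge> 0" using LB0 al L mA by (simp add: C_def)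
  have t0: "0 \<le> t" using Ipos t by blast
  have sub: "{0..t} \<subseteq> I" using Isub t by blast
  have cu: "continuous_on I u'" using su unfolding is_solution_def by blast
  have cv: "continuous_on I v'" using sv unfolding is_solution_def by blast
  define \<phi> where "\<phi> r = norm (u' r - v' r)" for r
  have c\<phi>: "continuous_on {0..t} \<phi>" unfolding \<phi>_def
    by (intro continuous_intros continuous_on_subset[OF cu sub] continuous_on_subset[OF cv sub])
  have est: "\<phi> s \<le> C * integral {0..s} \<phi>" if s: "s \<in> {0..t}" for s
  proof -
    have sI: "s \<in> I" using s sub by blast
    define Q where "Q = integral {0..s} \<phi>"
    have hu: "norm (u s - v s) \<le> Q" unfolding Q_def \<phi>_def by (rule sol_diff_bound[OF su sv sI])
    have hS: "norm (S u' s - S v' s) \<le> L * Q" unfolding Q_def \<phi>_def using L(2) cu cv s by blast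
    have hB: "norm (B (u s) - B (v s)) \<le> LB * Q"
      using B_lip[of "u s" "v s"] mult_left_mono[OF hu LB0] by linarith
    have hg: "norm ((f s - B (u s) - S u' s) - (f s - B (v s) - S v' s)) \<le> LB * Q + L * Q"
    proof -
      have e: "(f s - B (u s) - S u' s) - (f s - B (v s) - S v' s) = - (B (u s) - B (v s)) - (S u' s - S v' s)"
        by (simp add: algebra_simps)
      show ?thesis unfolding e using norm_triangle_ineq4[of "- (B (u s) - B (v s))" "S u' s - S v' s"] hB hS
        by (simp add: norm_minus_commute)
    qed
    have "mA * norm (u' s - v' s) \<le> norm ((f s - B (u s) - S u' s) - (f s - B (v s) - S v' s)) + \<alpha> * norm (u s - v s)"
      by (rule sol_est[OF mA al A_mono sol_props[OF su sI] sol_props[OF sv sI]])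
    hence "mA * \<phi> s \<le> (LB + \<alpha> + L) * Q"
      using hg mult_left_mono[OF hu al] unfolding \<phi>_def by (simp add: algebra_simps)
    thus ?thesis unfolding Q_def[symmetric] C_def using mA by (simp add: field_simps mult.commute)
  qed
  have z: "\<phi> s = 0" if "s \<in> {0..t}" for s
    by (rule gronwall0[OF t0 c\<phi> _ est C0 that]) (simp add: \<phi>_def)
  have "norm (u t - v t) \<le> integral {0..t} \<phi>" unfolding \<phi>_def by (rule sol_diff_bound[OF su sv t])
  also have "integral {0..t} \<phi> = integral {0..t} (\<lambda>_. 0::real)" by (rule integral_cong) (use z in auto)
  finally show ?thesis by simp
qed

end


theorem corollary4p2:
  fixes I :: "real set"
    and K :: "'a::{real_inner, complete_space} set"
    and A B :: "'a \<Rightarrow> 'a"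
    and f :: "real \<Rightarrow> 'a"
    and S :: "(real \<Rightarrow> 'a) \<Rightarrow> (real \<Rightarrow> 'a)"
    and j :: "'a \<Rightarrow> 'a \<Rightarrow> real"
    and u0 :: 'a
    and mA LA \<alpha>j :: real
  assumes I: "(\<exists>T>0. I = {0..T}) \<or> I = {0..}"
    and K: "convex_cone K" "closed K"
    and mA: "mA > 0" and LA: "LA > 0"
    and A_mono: "\<forall>u v. inner (A u - A v) (u - v) \<ge> mA * (norm (u - v))\<^sup>2"
    and A_lip: "\<forall>u v. norm (A u - A v) \<le> LA * norm (u - v)"
    and f: "continuous_on I f"
    and B: "\<exists>LB. LB-lipschitz_on UNIV B"
    and S_cont: "\<forall>w. continuous_on I w \<longrightarrow> continuous_on I (S w)"
    and S_hist: "history_dependent I S"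
    and j_convex: "\<forall>\<eta>. convex_on K (j \<eta>)"
    and j_homog: "\<forall>\<eta>. \<forall>c>0. \<forall>v\<in>K. j \<eta> (c *\<^sub>R v) = c * j \<eta> v"
    and j_lip: "\<forall>\<eta>. \<exists>L. L-lipschitz_on K (j \<eta>)"
    and \<alpha>j: "\<alpha>j \<ge> 0"
    and j_mix: "\<forall>\<eta>1 \<eta>2. \<forall>v1\<in>K. \<forall>v2\<in>K.
       j \<eta>1 v2 - j \<eta>1 v1 + j \<eta>2 v1 - j \<eta>2 v2 \<le> \<alpha>j * norm (\<eta>1 - \<eta>2) * norm (v1 - v2)"
  shows "(\<exists>u u'. is_solution I A B S f j K u0 u u' \<and> (\<forall>t\<in>I. u' t \<in> K)) \<and>
         (\<forall>u u' v v'. is_solution I A B S f j K u0 u u' \<and> is_solution I A B S f j K u0 v v'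
             \<longrightarrow> (\<forall>t\<in>I. u t = v t))"
  proof -
  obtain LB where LB: "LB-lipschitz_on UNIV B" using B by blast
  have Ifacts: "0 \<in> I \<and> (\<forall>T. T \<in> I \<longrightarrow> {0..T} \<subseteq> I) \<and> (\<forall>t. t \<in> I \<longrightarrow> 0 \<le> t) \<and>
      (\<forall>t. t \<in> I \<longrightarrow> (\<exists>T\<in>I. t \<le> T \<and> at t within I = at t within {0..T}))"
    using I
  proof
    assume "\<exists>T>0. I = {0..T}"
    then obtain T0 where T0: "T0 > 0" "I = {0..T0}" by blast
    show ?thesis using T0 by auto
  next
    assume I': "I = {0..}"
    have "at t within {0..} = at t within {0..t+1}" for t :: real
      by (rule at_within_nhd[of t "{..<t+1}"]) auto
    thus ?thesis using I' by (auto intro!: bexI[of _ "t+1" for t])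
  qed
  interpret prob K j \<alpha>j I A B S f u0 mA LA LB
    by unfold_locales (use K j_convex j_homog j_lip j_mix Ifacts mA LA A_mono A_lip f LB S_cont S_hist \<alpha>j in auto)
  show ?thesis using existence uniqueness by blast
qed

end
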